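(* Let $\mathbf{w}\in\Sigma^\omega$ be an infinite word with appearance constant $\mathbf{A}_\mathbf{w}<\infty$, and let $S\subseteq\mathbb{N}$ be the greedy string attractor for $\mathbf{w}$. Then for all $n\ge0$, $S\cap[0..n-1]$ is a string attractor for $\mathbf{w}[0..n-1]$, and its size is $O(\mathbf{A}_\mathbf{w}\log n)$ (with an absolute implied constant).
   Context: $\Sigma$ is a finite alphabet; words are indexed from $0$ and $[a..b]=\{a,\ldots,b\}$. The appearance constant $\mathbf{A}_\mathbf{w}$ is the least constant $C$ such that for every $m\ge1$, every length-$m$ factor of $\mathbf{w}$ has an occurrence in the prefix of length at most $Cm$. For a set $T\subseteq\mathbb{N}$ and $j\ge0$, say $T$ is a string attractor for $\mathbf{w}[0..j]$ if every nonempty factor of $\mathbf{w}[0..j]$ has an occurrence $\mathbf{w}[p..q]$ with $q\le j$ and $p\le t\le q$ for some $t\in T$. The greedy string attractor of $\mathbf{w}$ is $S=\bigcup_{m}S_m$ where $S_0=\emptyset$ and, for $m\ge0$, $S_{m+1}=S_m\cup\{j\}$ with $j$ the smallest integer such that $S_m$ is not a string attractor for $\mathbf{w}[0..j]$ (and $S_{m+1}=S_m$ if no such $j$ exists). *)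

theory Defs
  imports Complex_Main
begin

text \<open>Infinite words over a finite alphabet are modelled as w :: nat \<Rightarrow> nat with
  finite range (every finite alphabet embeds into nat). Positions start at 0.\<close>

definition appear_ok :: "(nat \<Rightarrow> nat) \<Rightarrow> real \<Rightarrow> bool" where
  "appear_ok w C \<longleftrightarrow>
     (\<forall>m i. m \<ge> 1 \<longrightarrow> (\<exists>p. real (p + m) \<le> C * real m \<and> (\<forall>k<m. w (p + k) = w (i + k))))"

text \<open>Appearance constant: the least such C (finite iff some C exists).\<close>
definition appearance_const :: "(nat \<Rightarrow> nat) \<Rightarrow> real" where
  "appearance_const w = Inf {C. appear_ok w C}"

definition prefix_attractor :: "(nat \<Rightarrow> nat) \<Rightarrow> nat set \<Rightarrow> nat \<Rightarrow> bool" where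
  "prefix_attractor w T n \<longleftrightarrow>
     (\<forall>i l. l \<ge> 1 \<and> i + l \<le> n \<longrightarrow>
        (\<exists>p t. p + l \<le> n \<and> t \<in> T \<and> p \<le> t \<and> t < p + l \<and>
               (\<forall>k<l. w (p + k) = w (i + k))))"

text \<open>Greedy construction: S_0 = {}, S_(m+1) = S_m \<union> {j} with j least such that S_m is not
  a string attractor for w[0..j] (= prefix of length j+1).\<close>
primrec greedy_step :: "(nat \<Rightarrow> nat) \<Rightarrow> nat \<Rightarrow> nat set" where
  "greedy_step w 0 = {}"
| "greedy_step w (Suc m) =
     (if \<exists>j. \<not> prefix_attractor w (greedy_step w m) (Suc j)
      then insert (LEAST j. \<not> prefix_attractor w (greedy_step w m) (Suc j)) (greedy_step w m)
      else greedy_step w m)"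

definition greedy_attractor :: "(nat \<Rightarrow> nat) \<Rightarrow> nat set" where
  "greedy_attractor w = (\<Union>m. greedy_step w m)"

end

theory Submission
  imports Defs
begin

lemma PA_mono: "prefix_attractor w T n \<Longrightarrow> T \<subseteq> T' \<Longrightarrow> prefix_attractor w T' n"
  unfolding prefix_attractor_def by blast

lemma PA_restrict: "prefix_attractor w T n \<Longrightarrow> prefix_attractor w (T \<inter> {..<n}) n"
  unfolding prefix_attractor_def
proof (intro allI impI)
  fix i l assume h: "1 \<le> l \<and> i + l \<le> n" and
    A: "\<forall>i l. 1 \<le> l \<and> i + l \<le> n \<longrightarrow> (\<exists>p t. p + l \<le> n \<and> t \<in> T \<and> p \<le> t \<and> t < p + l \<and> (\<forall>k<l. w (p + k) = w (i + k)))"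
  then obtain p t where pt: "p + l \<le> n" "t \<in> T" "p \<le> t" "t < p + l" "\<forall>k<l. w (p + k) = w (i + k)"
    by blast
  then have "t \<in> T \<inter> {..<n}" by simp
  then show "\<exists>p t. p + l \<le> n \<and> t \<in> T \<inter> {..<n} \<and> p \<le> t \<and> t < p + l \<and> (\<forall>k<l. w (p + k) = w (i + k))"
    using pt by blast
qed

lemma PA_zero: "prefix_attractor w T 0"
  unfolding prefix_attractor_def by simp

lemma PA_Suc:
  assumes "prefix_attractor w T j" "j \<in> T"
  shows "prefix_attractor w T (Suc j)"
  unfolding prefix_attractor_def
proof (intro allI impI)
  fix i l :: nat assume h: "1 \<le> l \<and> i + l \<le> Suc j"
  show "\<exists>p t. p + l \<le> Suc j \<and> t \<in> T \<and> p \<le> t \<and> t < p + l \<and> (\<forall>k<l. w (p + k) = w (i + k))"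
  proof (cases "i + l \<le> j")
    case True
    then obtain p t where "p + l \<le> j \<and> t \<in> T \<and> p \<le> t \<and> t < p + l \<and> (\<forall>k<l. w (p + k) = w (i + k))"
      using assms(1) h unfolding prefix_attractor_def by blast
    then show ?thesis by (intro exI[of _ p] exI[of _ t]) auto
  next
    case False
    then show ?thesis using h assms(2) by (intro exI[of _ i] exI[of _ j]) auto
  qed
qed

lemma least_facts:
  assumes "\<exists>j. \<not> prefix_attractor w T (Suc j)"
  defines "j \<equiv> LEAST j. \<not> prefix_attractor w T (Suc j)"
  shows "\<not> prefix_attractor w T (Suc j)" "\<forall>n\<le>j. prefix_attractor w T n"
proof -
  show "\<not> prefix_attractor w T (Suc j)" unfolding j_def using assms(1) by (rule LeastI_ex)
  show "\<forall>n\<le>j. prefix_attractor w T n"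
  proof (intro allI impI)
    fix n assume "n \<le> j"
    show "prefix_attractor w T n"
    proof (cases n)
      case 0 then show ?thesis by (simp add: PA_zero)
    next
      case (Suc n')
      then have "n' < j" using \<open>n \<le> j\<close> by simp
      then show ?thesis unfolding Suc j_def using not_less_Least by blast
    qed
  qed
qed

lemma key:
  assumes PAj: "prefix_attractor w T j" and fail: "\<not> prefix_attractor w T (Suc j)"
    and sT: "s \<in> T" and sj: "s < j" and ap: "appear_ok w C"
  shows "real (Suc j) \<le> C * real (j - s)"
proof -
  obtain i l where l1: "1 \<le> l" and il: "i + l \<le> Suc j" and
    nc: "\<And>p t. p + l \<le> Suc j \<Longrightarrow> t \<in> T \<Longrightarrow> p \<le> t \<Longrightarrow> t < p + l \<Longrightarrow> \<not> (\<forall>k<l. w (p + k) = w (i + k))"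
    using fail unfolding prefix_attractor_def by blast
  have noocc: False if q: "q + l \<le> j" "\<forall>k<l. w (q + k) = w (i + k)" for q
  proof -
    obtain p t where "p + l \<le> j" "t \<in> T" "p \<le> t" "t < p + l" "\<forall>k<l. w (p + k) = w (q + k)"
      using PAj q l1 unfolding prefix_attractor_def by blast
    then show False using nc[of p t] q by auto
  qed
  have eq: "i + l = Suc j"
  proof (rule ccontr)
    assume "i + l \<noteq> Suc j"
    then have "i + l \<le> j" using il by simp
    then show False using noocc[of i] by blast
  qed
  have si: "s < i"
  proof (rule ccontr)
    assume "\<not> s < i"
    then show False using nc[of i s] eq sT sj by auto
  qed
  define L where "L = j - s"
  have L1: "1 \<le> L" using sj L_def by simp
  obtain p where pL: "real (p + L) \<le> C * real L" and pm: "\<forall>k<L. w (p + k) = w (Suc s + k)"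
    using ap L1 unfolding appear_ok_def by blast
  have ps: "Suc s \<le> p"
  proof (rule ccontr)
    assume "\<not> Suc s \<le> p"
    define q where "q = p + (i - Suc s)"
    have "q + l \<le> j" using q_def eq si L_def \<open>\<not> Suc s \<le> p\<close> by simp
    moreover have "\<forall>k<l. w (q + k) = w (i + k)"
    proof (intro allI impI)
      fix k assume "k < l"
      then have "i - Suc s + k < L" using eq si L_def by simp
      then have "w (p + (i - Suc s + k)) = w (Suc s + (i - Suc s + k))" using pm by blast
      moreover have "Suc s + (i - Suc s + k) = i + k" using si by simp
      ultimately show "w (q + k) = w (i + k)" unfolding q_def by (simp add: add.assoc)
    qed
    ultimately show False using noocc by blast
  qed
  have "Suc j = Suc s + L" using L_def sj by simp
  then have "real (Suc j) \<le> real (p + L)" using ps by simp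
  then have "real (Suc j) \<le> C * real L" using pL by linarith
  then show ?thesis unfolding L_def .
qed

abbreviation G where "G w m \<equiv> greedy_step w m"

definition gM :: "(nat \<Rightarrow> nat) \<Rightarrow> nat \<Rightarrow> nat" where
  "gM w m = (if G w m = {} then 0 else Suc (Max (G w m)))"

lemma finite_G: "finite (G w m)"
  by (induction m) auto

lemma G_Suc_sub: "G w m \<subseteq> G w (Suc m)"
  by auto

lemma G_mono: "m \<le> m' \<Longrightarrow> G w m \<subseteq> G w m'"
  using lift_Suc_mono_le[of "G w", OF G_Suc_sub] by blast

lemma below_gM: "x \<in> G w m \<Longrightarrow> x < gM w m"
  unfolding gM_def using finite_G[of w m] by (auto simp: le_imp_less_Suc)

lemma gj_lemma: "\<forall>n \<le> M. prefix_attractor w T n \<Longrightarrow> \<not> prefix_attractor w T (Suc j) \<Longrightarrow> M \<le> j"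
proof (rule ccontr)
  assume a: "\<forall>n \<le> M. prefix_attractor w T n" "\<not> prefix_attractor w T (Suc j)" "\<not> M \<le> j"
  then have "Suc j \<le> M" by simp
  then show False using a by blast
qed

lemma lt_lemma: "gM w m \<le> j \<Longrightarrow> \<forall>x\<in>G w m. x < j"
proof
  fix x assume "gM w m \<le> j" "x \<in> G w m"
  then show "x < j" using below_gM[of x w m] by simp
qed

lemma inv: "\<forall>n \<le> gM w m. prefix_attractor w (G w m) n"
proof (induction m)
  case 0
  then show ?case by (simp add: gM_def PA_zero)
next
  case (Suc m)
  show ?case
  proof (cases "\<exists>j. \<not> prefix_attractor w (G w m) (Suc j)")
    case True
    define j where "j = (LEAST j. \<not> prefix_attractor w (G w m) (Suc j))"
    have f1: "\<not> prefix_attractor w (G w m) (Suc j)" and f2: "\<forall>n\<le>j. prefix_attractor w (G w m) n"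
      using least_facts[OF True, folded j_def] by blast+
    have gj: "gM w m \<le> j" using gj_lemma[OF Suc.IH f1] .
    have lt: "\<forall>x\<in>G w m. x < j" using lt_lemma[OF gj] .
    have GS: "G w (Suc m) = insert j (G w m)" using True j_def by simp
    have MS: "gM w (Suc m) = Suc j"
      unfolding gM_def GS using lt finite_G[of w m]
      by (simp add: Max_insert2 less_imp_le)
    show ?thesis unfolding MS
    proof (intro allI impI)
      fix n assume "n \<le> Suc j"
      then consider "n \<le> j" | "n = Suc j" by linarith
      then show "prefix_attractor w (G w (Suc m)) n"
      proof cases
        case 1 then show ?thesis using f2 PA_mono G_Suc_sub by blast
      next
        case 2
        have "prefix_attractor w (G w (Suc m)) j" using f2 PA_mono G_Suc_sub by blast
        then show ?thesis unfolding 2 using PA_Suc GS by blast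
      qed
    qed
  next
    case False
    then have eq: "G w (Suc m) = G w m" by simp
    show ?thesis unfolding gM_def eq using Suc.IH[unfolded gM_def] .
  qed
qed

lemma grows: "(\<forall>n. prefix_attractor w (G w m) n) \<or> m \<le> gM w m"
proof (induction m)
  case 0 then show ?case by simp
next
  case (Suc m)
  show ?case
  proof (cases "\<exists>j. \<not> prefix_attractor w (G w m) (Suc j)")
    case True
    define j where "j = (LEAST j. \<not> prefix_attractor w (G w m) (Suc j))"
    have f1: "\<not> prefix_attractor w (G w m) (Suc j)"
      using least_facts[OF True, folded j_def] by blast+
    have gj: "gM w m \<le> j" using gj_lemma[OF inv[of w m] f1] .
    have lt: "\<forall>x\<in>G w m. x < j" using lt_lemma[OF gj] .
    have GS: "G w (Suc m) = insert j (G w m)" using True j_def by simp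
    have MS: "gM w (Suc m) = Suc j"
      unfolding gM_def GS using lt finite_G[of w m]
      by (simp add: Max_insert2 less_imp_le)
    have "m \<le> gM w m" using Suc.IH True by blast
    then show ?thesis using MS gj by simp
  next
    case False
    then have "G w (Suc m) = G w m" by simp
    moreover have "\<forall>n. prefix_attractor w (G w m) n"
    proof
      fix n show "prefix_attractor w (G w m) n"
      proof (cases n)
        case 0 then show ?thesis by (simp add: PA_zero)
      next
        case (Suc n') then show ?thesis using False by blast
      qed
    qed
    ultimately show ?thesis by simp
  qed
qed

lemma C_ge1: "appear_ok w C \<Longrightarrow> 1 \<le> C"
proof -
  assume "appear_ok w C"
  then obtain p where "real (p + 1) \<le> C * real (1::nat)"
    unfolding appear_ok_def by blast
  then show "1 \<le> C" by simp
qed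

lemma ln_step:
  fixes s j :: nat and C :: real
  assumes "s < j" "real (Suc j) \<le> C * real (j - s)" "1 \<le> C"
  shows "1 + C * ln (real (Suc s)) \<le> C * ln (real (Suc j))"
proof -
  have pos1: "(0::real) < real (Suc s)" "(0::real) < real (Suc j)" by auto
  have "ln (real (Suc s) / real (Suc j)) \<le> real (Suc s) / real (Suc j) - 1"
    using pos1 by (intro ln_le_minus_one) simp
  then have "ln (real (Suc s)) - ln (real (Suc j)) \<le> real (Suc s) / real (Suc j) - 1"
    using pos1 by (simp add: ln_divide_pos)
  moreover have "real (Suc s) / real (Suc j) - 1 = - (real (j - s) / real (Suc j))"
    using assms(1) pos1 by (simp add: field_simps of_nat_diff)
  ultimately have A: "real (j - s) / real (Suc j) \<le> ln (real (Suc j)) - ln (real (Suc s))"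
    by linarith
  have "1 \<le> C * (real (j - s) / real (Suc j))"
  proof -
    define d where "d = real (j - s)"
    define J where "J = real (Suc j)"
    have "J \<le> C * d" using assms(2) unfolding d_def J_def .
    moreover have "0 < J" unfolding J_def by simp
    ultimately have "1 \<le> C * (d / J)" by (simp add: field_simps)
    then show ?thesis unfolding d_def J_def .
  qed
  also have "\<dots> \<le> C * (ln (real (Suc j)) - ln (real (Suc s)))"
    using A assms(3) by (intro mult_left_mono) auto
  finally show ?thesis by (simp add: algebra_simps)
qed

lemma count_G:
  assumes ap: "appear_ok w C"
  shows "1 \<le> n \<Longrightarrow> real (card (G w m \<inter> {..<n})) \<le> 1 + C * ln (real n)"
proof (induction m arbitrary: n)
  case 0
  have "0 \<le> C * ln (real n)" using C_ge1[OF ap] 0 by simp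
  then show ?case by simp
next
  case (Suc m)
  have C1: "1 \<le> C" using C_ge1[OF ap] .
  have lnn: "0 \<le> C * ln (real n)" using C1 Suc.prems by simp
  show ?case
  proof (cases "\<exists>j. \<not> prefix_attractor w (G w m) (Suc j)")
    case True
    define j where "j = (LEAST j. \<not> prefix_attractor w (G w m) (Suc j))"
    have f1: "\<not> prefix_attractor w (G w m) (Suc j)" and f2: "\<forall>n\<le>j. prefix_attractor w (G w m) n"
      using least_facts[OF True, folded j_def] by blast+
    have gj: "gM w m \<le> j" using gj_lemma[OF inv[of w m] f1] .
    have lt: "\<forall>x\<in>G w m. x < j" using lt_lemma[OF gj] .
    have GS: "G w (Suc m) = insert j (G w m)" using True j_def by simp
    show ?thesis
    proof (cases "n \<le> j")
      case True
      then have "G w (Suc m) \<inter> {..<n} = G w m \<inter> {..<n}" using GS by auto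
      then show ?thesis using Suc.IH Suc.prems by simp
    next
      case False
      then have E: "G w (Suc m) \<inter> {..<n} = insert j (G w m)" using GS lt by auto
      have cardE: "card (G w (Suc m) \<inter> {..<n}) = Suc (card (G w m))"
      proof -
        have "j \<notin> G w m" using lt by blast
        then show ?thesis unfolding E using finite_G[of w m] by (simp add: card_insert_disjoint)
      qed
      show ?thesis
      proof (cases "G w m = {}")
        case True
        then show ?thesis using cardE lnn by simp
      next
        case ne: False
        define s where "s = Max (G w m)"
        have sG: "s \<in> G w m" using ne finite_G[of w m] s_def by simp
        have sj: "s < j" using lt sG by blast
        have "G w m \<inter> {..<Suc s} = G w m"
          using finite_G[of w m] s_def by (auto simp: le_imp_less_Suc)
        then have IH: "real (card (G w m)) \<le> 1 + C * ln (real (Suc s))"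
          using Suc.IH[of "Suc s"] by simp
        have PAj: "prefix_attractor w (G w m) j" using f2 by simp
        have "real (Suc j) \<le> C * real (j - s)" using key[OF PAj f1 sG sj ap] .
        then have st: "1 + C * ln (real (Suc s)) \<le> C * ln (real (Suc j))"
          using ln_step sj C1 by blast
        have "ln (real (Suc j)) \<le> ln (real n)" using False by simp
        then have "C * ln (real (Suc j)) \<le> C * ln (real n)" using C1 by simp
        then show ?thesis using cardE IH st by simp
      qed
    qed
  next
    case False
    then have "G w (Suc m) = G w m" by simp
    then show ?thesis using Suc.IH Suc.prems by simp
  qed
qed

lemma finite_in_G: "finite F \<Longrightarrow> F \<subseteq> greedy_attractor w \<Longrightarrow> \<exists>m. F \<subseteq> G w m"
proof (induction F rule: finite_induct)
  case empty then show ?case by simp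
next
  case (insert x F)
  then obtain m1 where m1: "F \<subseteq> G w m1" by auto
  obtain m2 where m2: "x \<in> G w m2" using insert.prems unfolding greedy_attractor_def by auto
  have "F \<subseteq> G w (max m1 m2)" using m1 G_mono[of m1 "max m1 m2" w] by auto
  moreover have "x \<in> G w (max m1 m2)" using m2 G_mono[of m2 "max m1 m2" w] by auto
  ultimately show ?case by blast
qed

lemma part1: "prefix_attractor w (greedy_attractor w \<inter> {..<n}) n"
proof -
  have "prefix_attractor w (G w n) n"
    using grows[of w n] inv[of w n] by blast
  moreover have "G w n \<subseteq> greedy_attractor w" unfolding greedy_attractor_def by blast
  ultimately show ?thesis using PA_mono PA_restrict by blast
qed

lemma part2:
  assumes ap: "appear_ok w C" and n2: "2 \<le> n"
  shows "real (card (greedy_attractor w \<inter> {..<n})) \<le> 3 * C * ln (real n)"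
proof -
  obtain m where m: "greedy_attractor w \<inter> {..<n} \<subseteq> G w m"
    using finite_in_G[of "greedy_attractor w \<inter> {..<n}" w] by blast
  then have "greedy_attractor w \<inter> {..<n} \<subseteq> G w m \<inter> {..<n}" by blast
  then have "card (greedy_attractor w \<inter> {..<n}) \<le> card (G w m \<inter> {..<n})"
    using finite_G[of w m] by (intro card_mono) auto
  moreover have "real (card (G w m \<inter> {..<n})) \<le> 1 + C * ln (real n)"
    using count_G[OF ap] n2 by simp
  moreover have "1 \<le> 2 * C * ln (real n)"
  proof -
    have "ln (1/2::real) \<le> 1/2 - 1" by (rule ln_le_minus_one) simp
    then have l2: "1/2 \<le> ln (2::real)" by (simp add: ln_div)
    have "ln (2::real) \<le> ln (real n)" using n2 by simp
    then have "1/2 \<le> ln (real n)" using l2 by linarith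
    moreover have "1 \<le> C" using C_ge1[OF ap] .
    ultimately have "1/2 \<le> C * ln (real n)"
      using mult_mono[of 1 C "1/2" "ln (real n)"] by simp
    then show ?thesis by simp
  qed
  ultimately show ?thesis by linarith
qed

theorem theorem21:
  shows "\<exists>K::real. \<forall>w :: nat \<Rightarrow> nat.
           finite (range w) \<and> (\<exists>C. appear_ok w C) \<longrightarrow>
             (\<forall>n. prefix_attractor w (greedy_attractor w \<inter> {..<n}) n) \<and>
             (\<forall>n::nat. n \<ge> 2 \<longrightarrow>
                real (card (greedy_attractor w \<inter> {..<n})) \<le> K * appearance_const w * ln (real n))"
proof (intro exI[of _ 3] allI impI conjI)
  fix w :: "nat \<Rightarrow> nat" and n :: nat
  show "prefix_attractor w (greedy_attractor w \<inter> {..<n}) n" by (rule part1)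
next
  fix w :: "nat \<Rightarrow> nat" and n :: nat
  assume h: "finite (range w) \<and> (\<exists>C. appear_ok w C)" and n2: "2 \<le> n"
  define c where "c = real (card (greedy_attractor w \<inter> {..<n}))"
  have lnp: "0 < ln (real n)" using n2 by simp
  have "c / (3 * ln (real n)) \<le> appearance_const w"
    unfolding appearance_const_def
  proof (rule cInf_greatest)
    show "{C. appear_ok w C} \<noteq> {}" using h by blast
  next
    fix C assume "C \<in> {C. appear_ok w C}"
    then have "c \<le> 3 * C * ln (real n)" using part2 n2 c_def by blast
    then show "c / (3 * ln (real n)) \<le> C" using lnp by (simp add: divide_le_eq mult.commute mult.left_commute)
  qed
  then have "c \<le> appearance_const w * (3 * ln (real n))" using lnp by (simp add: divide_le_eq)
  then show "real (card (greedy_attractor w \<inter> {..<n})) \<le> 3 * appearance_const w * ln (real n)"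
    unfolding c_def by (simp add: mult.commute mult.left_commute)
qed

end
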